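(* Let $M$ be a proper metric space and $X_1,\dots,X_n$ a coarsely transverse collection of half spaces in $M$. For $\sigma\in S_n$ put $A_0^\sigma=X_{\sigma_1}\cdots X_{\sigma_n}$ and $A_i^\sigma=X_{\sigma_i}^cX_{\sigma_{i+1}}\cdots X_{\sigma_n}$ ($i=1,\dots,n$), and $A_i=A_i^{\mathrm{id}}$. Then for every $\sigma\in S_n$, $$[A_0^\sigma\wedge\dots\wedge A_n^\sigma]=\mathrm{sgn}(\sigma)\,[A_0\wedge\dots\wedge A_n]\in HX^n(M).$$
   Context: Borel sets are identified with their indicator functions. For $Y\subseteq M$, $Y_R=\{x:d(x,Y)\le R\}$. Borel sets $X_1,\dots,X_n$ form a coarsely transverse collection of half spaces if $\bigcap_i (X_i)_R\cap(X_i^c)_R$ is bounded for all $R\ge0$. Coarse cohomology: equip $M^{n+1}$ with the max metric, $\Delta_R$ the $R$-thickening of the multi-diagonal. $CX^n(M)$ consists of locally bounded Borel functions $\theta:M^{n+1}\to\mathbb{C}$ with $\mathrm{supp}(\theta)\cap\Delta_R$ bounded for all $R>0$, with differential $\delta\theta=\sum_{i=0}^{n+1}(-1)^i\pi_i^*\theta$ ($\pi_i$ omits the $i$-th coordinate); $HX^n(M)$ is its cohomology. For bounded Borel $f_j$, $f_0\wedge\dots\wedge f_n=\sum_{\tau\in S_{n+1}}\mathrm{sgn}(\tau)f_{\tau_0}\otimes\dots\otimes f_{\tau_n}$. Each $A^\sigma_0\wedge\dots\wedge A^\sigma_n$ is a coarse cocycle. *)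

theory Defs
  imports "HOL-Analysis.Analysis" "HOL-Combinatorics.Permutations"
begin

text \<open>Points of M^(n+1) are extensional functions on {..n}; the space is PiE {..n} (\<lambda>_. UNIV).\<close>

definition prodsp :: "nat \<Rightarrow> (nat \<Rightarrow> 'a) set" where
  "prodsp n = PiE {..n} (\<lambda>_. UNIV)"

definition dmax :: "nat \<Rightarrow> (nat \<Rightarrow> 'a::metric_space) \<Rightarrow> (nat \<Rightarrow> 'a) \<Rightarrow> real" where
  "dmax n x y = Max ((\<lambda>i. dist (x i) (y i)) ` {..n})"

definition bounded_prod :: "nat \<Rightarrow> (nat \<Rightarrow> 'a::metric_space) set \<Rightarrow> bool" where
  "bounded_prod n S \<longleftrightarrow> (\<exists>z \<in> prodsp n. \<exists>r. \<forall>x\<in>S. dmax n x z \<le> r)"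

definition diag_thick :: "nat \<Rightarrow> real \<Rightarrow> (nat \<Rightarrow> 'a::metric_space) set" where
  "diag_thick n R = {x \<in> prodsp n. \<exists>m. dmax n x (\<lambda>_. m) \<le> R}"

definition locally_bounded_prod :: "nat \<Rightarrow> ((nat \<Rightarrow> 'a::metric_space) \<Rightarrow> complex) \<Rightarrow> bool" where
  "locally_bounded_prod n \<theta> \<longleftrightarrow>
     (\<forall>S \<subseteq> prodsp n. bounded_prod n S \<longrightarrow> (\<exists>C. \<forall>x\<in>S. norm (\<theta> x) \<le> C))"

definition CX :: "nat \<Rightarrow> ((nat \<Rightarrow> 'a::metric_space) \<Rightarrow> complex) set" where
  "CX n = {\<theta>. \<theta> \<in> borel_measurable (PiM {..n} (\<lambda>_. borel))
              \<and> locally_bounded_prod n \<theta>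
              \<and> (\<forall>R>0. bounded_prod n ({x \<in> prodsp n. \<theta> x \<noteq> 0} \<inter> diag_thick n R))}"

definition face :: "nat \<Rightarrow> nat \<Rightarrow> (nat \<Rightarrow> 'a) \<Rightarrow> (nat \<Rightarrow> 'a)" where
  "face n i x = restrict (\<lambda>j. if j < i then x j else x (Suc j)) {..n}"

definition cobdry :: "nat \<Rightarrow> ((nat \<Rightarrow> 'a) \<Rightarrow> complex) \<Rightarrow> (nat \<Rightarrow> 'a) \<Rightarrow> complex" where
  "cobdry n \<theta> x = (\<Sum>i\<le>Suc n. (-1) ^ i * \<theta> (face n i x))"

text \<open>Equality of classes in HX^n(M) of two cochains in CX^n (difference is a coboundary)\<close>
definition same_class :: "nat \<Rightarrow> ((nat \<Rightarrow> 'a::metric_space) \<Rightarrow> complex) \<Rightarrow> ((nat \<Rightarrow> 'a) \<Rightarrow> complex) \<Rightarrow> bool" where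
  "same_class n \<theta>1 \<theta>2 \<longleftrightarrow>
     (if n = 0 then (\<forall>x\<in>prodsp 0. \<theta>1 x = \<theta>2 x)
      else (\<exists>\<psi>\<in>CX (n - 1). \<forall>x\<in>prodsp n. \<theta>1 x - \<theta>2 x = cobdry (n - 1) \<psi> x))"

definition wedge :: "nat \<Rightarrow> (nat \<Rightarrow> 'a \<Rightarrow> complex) \<Rightarrow> (nat \<Rightarrow> 'a) \<Rightarrow> complex" where
  "wedge n f x = (\<Sum>\<tau>\<in>{\<tau>. \<tau> permutes {..n}}. of_int (sign \<tau>) * (\<Prod>i\<le>n. f (\<tau> i) (x i)))"

text \<open>Y_R = {x. d(x,Y) \<le> R}, with d(x,{}) = \<infinity>\<close>
definition thick :: "'a::metric_space set \<Rightarrow> real \<Rightarrow> 'a set" where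
  "thick Y R = {x. Y \<noteq> {} \<and> infdist x Y \<le> R}"

definition coarsely_transverse :: "nat \<Rightarrow> (nat \<Rightarrow> 'a::metric_space set) \<Rightarrow> bool" where
  "coarsely_transverse n X \<longleftrightarrow>
     (\<forall>i\<in>{1..n}. X i \<in> sets borel) \<and>
     (\<forall>R\<ge>0. bounded (\<Inter>i\<in>{1..n}. thick (X i) R \<inter> thick (- X i) R))"

definition Aset :: "nat \<Rightarrow> (nat \<Rightarrow> 'a set) \<Rightarrow> (nat \<Rightarrow> nat) \<Rightarrow> nat \<Rightarrow> 'a set" where
  "Aset n X \<sigma> i = (if i = 0 then (\<Inter>k\<in>{1..n}. X (\<sigma> k))
                    else - X (\<sigma> i) \<inter> (\<Inter>k\<in>{i+1..n}. X (\<sigma> k)))"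

end

theory Submission imports Defs "Jordan_Normal_Form.Determinant" begin

definition epsl :: "nat \<Rightarrow> (nat \<Rightarrow> nat) \<Rightarrow> complex" where
  "epsl n t = (\<Sum>\<tau>\<in>{\<tau>. \<tau> permutes {..n}}. of_int (sign \<tau>) * (\<Prod>i\<le>n. of_bool (t i = \<tau> i)))"

lemma epsl_det: "epsl n t = Determinant.det (Matrix.mat (Suc n) (Suc n) (\<lambda>(i,j). of_bool (t i = j)))"
proof -
  have e: "{..n} = {0..<Suc n}" by auto
  show ?thesis
    unfolding epsl_def
    apply (subst det_def'[of _ "Suc n"])
     apply simp
    unfolding e
    apply (rule sum.cong, simp)
    apply (rule arg_cong[where f="\<lambda>x. _ * x"])
    apply (rule prod.cong, simp)
    apply (subst index_mat)
    using permutes_in_image by fastforce+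
qed

lemma epsl_cocycle:
  assumes u: "\<And>i. i \<le> Suc n \<Longrightarrow> u i \<le> n"
  shows "(\<Sum>j\<le>Suc n. (-1)^j * epsl n (\<lambda>k. u (if k < j then k else Suc k))) = 0"
proof -
  define B :: "complex mat" where "B = Matrix.mat (Suc (Suc n)) (Suc (Suc n))
      (\<lambda>(i,j). if j = 0 then 1 else of_bool (u i = j - 1))"
  have Bc: "B \<in> carrier_mat (Suc (Suc n)) (Suc (Suc n))" unfolding B_def by simp
  have del: "mat_delete B j 0 = Matrix.mat (Suc n) (Suc n) (\<lambda>(i,k). of_bool (u (if i < j then i else Suc i) = k))"
    if "j < Suc (Suc n)" for j
    unfolding mat_delete_def B_def using that
    by (intro eq_matI) auto
  have "Determinant.det B = (\<Sum>j<Suc (Suc n). B $$ (j,0) * cofactor B j 0)"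
    by (rule laplace_expansion_column[OF Bc]) simp
  also have "\<dots> = (\<Sum>j\<le>Suc n. (-1)^j * epsl n (\<lambda>k. u (if k < j then k else Suc k)))"
    unfolding lessThan_Suc_atMost[symmetric]
    apply (rule sum.cong, simp)
    apply (simp add: cofactor_def del epsl_det)
    apply (simp add: B_def)
    done
  finally have eq: "Determinant.det B = (\<Sum>j\<le>Suc n. (-1)^j * epsl n (\<lambda>k. u (if k < j then k else Suc k)))" .
  define v :: "complex vec" where "v = Matrix.vec (Suc (Suc n)) (\<lambda>j. if j = 0 then 1 else -1)"
  have vc: "v \<in> carrier_vec (Suc (Suc n))" unfolding v_def by simp
  have vnz: "v \<noteq> 0\<^sub>v (Suc (Suc n))"
  proof
    assume "v = 0\<^sub>v (Suc (Suc n))"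
    then have "v $ 0 = 0\<^sub>v (Suc (Suc n)) $ 0" by simp
    then show False unfolding v_def by simp
  qed
  have rowsum: "(\<Sum>j<Suc n. (of_bool (u i = j) :: complex)) = 1" if "i < Suc (Suc n)" for i
  proof -
    have "(\<Sum>j<Suc n. (of_bool (u i = j) :: complex)) = (\<Sum>j<Suc n. if j = u i then 1 else 0)"
      by (rule sum.cong) auto
    have "u i \<le> n" using u that by simp
    then show ?thesis by (simp add: sum.delta)
  qed
  have Bv: "B *\<^sub>v v = 0\<^sub>v (Suc (Suc n))"
  proof (intro eq_vecI)
    fix i assume i: "i < dim_vec (0\<^sub>v (Suc (Suc n)) :: complex vec)"
    then have i': "i < Suc (Suc n)" by simp
    have "(B *\<^sub>v v) $ i = (\<Sum>j<Suc (Suc n). B $$ (i,j) * v $ j)"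
      using i' Bc vc unfolding mult_mat_vec_def scalar_prod_def B_def v_def
      by (simp add: atLeast0LessThan)
    also have "\<dots> = B $$ (i,0) * v $ 0 + (\<Sum>j<Suc n. B $$ (i, Suc j) * v $ Suc j)"
      by (subst sum.lessThan_Suc_shift) simp
    also have "\<dots> = 1 - (\<Sum>j<Suc n. (of_bool (u i = j) :: complex))"
      using i' by (simp add: B_def v_def sum_negf)
    also have "\<dots> = 0" using rowsum[OF i'] by simp
    finally show "(B *\<^sub>v v) $ i = 0\<^sub>v (Suc (Suc n)) $ i" using i' by simp
  qed (simp add: B_def)
  have "Determinant.det B = 0"
    using det_0_iff_vec_prod_zero_field[OF Bc] vc vnz Bv by blast
  then show ?thesis using eq by simp
qed

lemma epsl_cong: "(\<And>j. j \<le> n \<Longrightarrow> t j = t' j) \<Longrightarrow> epsl n t = epsl n t'"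
  unfolding epsl_def by (intro sum.cong refl arg_cong[where f="\<lambda>x. _ * x"] prod.cong) auto

lemma epsl_perm:
  assumes p: "\<pi> permutes {..n}"
  shows "epsl n (\<lambda>i. \<pi> (t i)) = of_int (sign \<pi>) * epsl n t"
proof -
  let ?P = "{\<tau>. \<tau> permutes {..n}}"
  have pp: "permutation \<pi>" using p permutation_permutes by blast
  have bij: "bij_betw ((\<circ>) \<pi>) ?P ?P"
  proof (rule bij_betw_byWitness[where f'="(\<circ>) (Hilbert_Choice.inv \<pi>)"])
    show "\<forall>a\<in>?P. Hilbert_Choice.inv \<pi> \<circ> (\<pi> \<circ> a) = a" using permutes_inv_o(2)[OF p] by (simp add: o_assoc)
    show "\<forall>a\<in>?P. \<pi> \<circ> (Hilbert_Choice.inv \<pi> \<circ> a) = a" using permutes_inv_o(1)[OF p] by (simp add: o_assoc)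
    show "(\<circ>) \<pi> ` ?P \<subseteq> ?P" using permutes_compose[OF _ p] by auto
    show "(\<circ>) (Hilbert_Choice.inv \<pi>) ` ?P \<subseteq> ?P" using permutes_compose[OF _ permutes_inv[OF p]] by auto
  qed
  have "epsl n (\<lambda>i. \<pi> (t i)) = (\<Sum>\<tau>\<in>?P. of_int (sign (\<pi> \<circ> \<tau>)) * (\<Prod>i\<le>n. of_bool (\<pi> (t i) = (\<pi> \<circ> \<tau>) i)))"
    unfolding epsl_def by (rule sum.reindex_bij_betw[OF bij, symmetric])
  also have "\<dots> = (\<Sum>\<tau>\<in>?P. of_int (sign \<pi>) * (of_int (sign \<tau>) * (\<Prod>i\<le>n. of_bool (t i = \<tau> i))))"
  proof (rule sum.cong, simp)
    fix \<tau> assume "\<tau> \<in> ?P"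
    then have "permutation \<tau>" using permutation_permutes by blast
    then have s: "sign (\<pi> \<circ> \<tau>) = sign \<pi> * sign \<tau>" using sign_compose pp by blast
    have "\<And>i. (\<pi> (t i) = \<pi> (\<tau> i)) = (t i = \<tau> i)" using permutes_inj[OF p] by (auto dest: injD)
    then show "of_int (sign (\<pi> \<circ> \<tau>)) * (\<Prod>i\<le>n. of_bool (\<pi> (t i) = (\<pi> \<circ> \<tau>) i)) =
      (of_int (sign \<pi>) * (of_int (sign \<tau>) * (\<Prod>i\<le>n. of_bool (t i = \<tau> i))) :: complex)"
      by (simp add: s)
  qed
  also have "\<dots> = of_int (sign \<pi>) * epsl n t" unfolding epsl_def by (simp add: sum_distrib_left)
  finally show ?thesis .
qed

definition mixv :: "('a \<Rightarrow> nat) \<Rightarrow> ('a \<Rightarrow> nat) \<Rightarrow> nat \<Rightarrow> (nat \<Rightarrow> 'a) \<Rightarrow> nat \<Rightarrow> nat" where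
  "mixv l1 l2 i x = (\<lambda>j. if j \<le> i then l1 (x j) else l2 (x (j - 1)))"

definition psi :: "nat \<Rightarrow> ('a \<Rightarrow> nat) \<Rightarrow> ('a \<Rightarrow> nat) \<Rightarrow> (nat \<Rightarrow> 'a) \<Rightarrow> complex" where
  "psi m l1 l2 x = (\<Sum>i\<le>m. (-1)^i * epsl (Suc m) (mixv l1 l2 i x))"

lemma m1sq: "((-1::complex)^i) * (-1)^i = 1"
  by (induct i) auto

lemma prism:
  assumes b1: "\<And>p. l1 p \<le> Suc m" and b2: "\<And>p. l2 p \<le> Suc m"
  shows "cobdry m (psi m l1 l2) x = epsl (Suc m) (\<lambda>j. l2 (x j)) - epsl (Suc m) (\<lambda>j. l1 (x j))"
proof -
  define N where "N = Suc m"
  define e where "e = epsl N"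
  define F where "F i k = (-1)^(i+k) * e (mixv l1 l2 i (face m k x))" for i k
  define Lo where "Lo i = (\<Sum>k\<le>i. F i k)" for i
  define Hi where "Hi i = (\<Sum>k\<in>{Suc i..N}. F i k)" for i
  define S where "S i = (\<lambda>k. if k < i then l1 (x k) else l2 (x k))" for i
  have lhs: "cobdry m (psi m l1 l2) x = (\<Sum>i\<le>m. Lo i + Hi i)"
  proof -
    have "cobdry m (psi m l1 l2) x = (\<Sum>k\<le>N. \<Sum>i\<le>m. F i k)"
      unfolding cobdry_def psi_def F_def e_def N_def
      by (simp add: sum_distrib_left power_add mult.assoc mult.left_commute)
    also have "\<dots> = (\<Sum>i\<le>m. \<Sum>k\<le>N. F i k)" by (rule sum.swap)
    also have "\<dots> = (\<Sum>i\<le>m. Lo i + Hi i)"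
    proof (rule sum.cong, simp)
      fix i assume "i \<in> {..m}"
      then have "{..N} = {..i} \<union> {Suc i..N}" "{..i} \<inter> {Suc i..N} = {}" unfolding N_def by auto
      then show "(\<Sum>k\<le>N. F i k) = Lo i + Hi i" unfolding Lo_def Hi_def
        by (simp add: sum.union_disjoint)
    qed
    finally show ?thesis .
  qed
  have per: "(if i = 0 then 0 else - Lo (i - 1)) - Hi i + e (S i) - e (S (Suc i)) = 0"
    if iN: "i \<le> N" for i
  proof -
    define u where "u = mixv l1 l2 i x"
    define c where "c j = (-1)^j * e (\<lambda>k. u (if k < j then k else Suc k))" for j
    have ub: "\<And>j. u j \<le> N" unfolding u_def mixv_def N_def using b1 b2 by auto
    have coc: "(\<Sum>j\<le>Suc N. c j) = 0"
      unfolding c_def e_def N_def using epsl_cocycle[of "Suc m" u] ub unfolding N_def by blast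
    have split: "(\<Sum>j\<le>Suc N. c j) = (\<Sum>j<i. c j) + c i + c (Suc i) + (\<Sum>k\<in>{Suc i..N}. c (Suc k))"
    proof -
      have "{..Suc N} = {..<i} \<union> {i..Suc N}" "{..<i} \<inter> {i..Suc N} = {}" using iN by auto
      then have "(\<Sum>j\<le>Suc N. c j) = (\<Sum>j<i. c j) + (\<Sum>j\<in>{i..Suc N}. c j)"
        by (simp add: sum.union_disjoint)
      also have "(\<Sum>j\<in>{i..Suc N}. c j) = c i + (\<Sum>j\<in>{Suc i..Suc N}. c j)"
        using iN by (subst sum.atLeast_Suc_atMost) auto
      also have "(\<Sum>j\<in>{Suc i..Suc N}. c j) = c (Suc i) + (\<Sum>j\<in>{Suc (Suc i)..Suc N}. c j)"
        using iN by (subst sum.atLeast_Suc_atMost) auto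
      also have "(\<Sum>j\<in>{Suc (Suc i)..Suc N}. c j) = (\<Sum>k\<in>{Suc i..N}. c (Suc k))"
        by (rule sum.shift_bounds_cl_Suc_ivl)
      finally show ?thesis by (simp add: add.assoc)
    qed
    have ci: "c i = (-1)^i * e (S i)"
      unfolding c_def e_def
      by (intro arg_cong[where f="\<lambda>z. _ * z"] epsl_cong) (auto simp: u_def mixv_def S_def)
    have cSi: "c (Suc i) = (-1)^(Suc i) * e (S (Suc i))"
      unfolding c_def e_def
      by (intro arg_cong[where f="\<lambda>z. _ * z"] epsl_cong) (auto simp: u_def mixv_def S_def)
    have hi: "(-1)^i * (\<Sum>k\<in>{Suc i..N}. c (Suc k)) = - Hi i"
    proof -
      have "(-1)^i * (\<Sum>k\<in>{Suc i..N}. c (Suc k)) = (\<Sum>k\<in>{Suc i..N}. - F i k)"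
        unfolding sum_distrib_left
      proof (rule sum.cong, simp)
        fix k assume k: "k \<in> {Suc i..N}"
        have "e (\<lambda>ka. u (if ka < Suc k then ka else Suc ka)) = e (mixv l1 l2 i (face m k x))"
          unfolding e_def
          by (rule epsl_cong) (use k in \<open>auto simp: u_def mixv_def face_def N_def\<close>)
        then show "(-1)^i * c (Suc k) = - F i k"
          unfolding c_def F_def by (simp add: power_add)
      qed
      then show ?thesis unfolding Hi_def by (simp add: sum_negf)
    qed
    have lo: "(-1)^i * (\<Sum>j<i. c j) = (if i = 0 then 0 else - Lo (i - 1))"
    proof (cases i)
      case 0 then show ?thesis by simp
    next
      case (Suc i')
      have "(-1)^i * (\<Sum>j<i. c j) = (\<Sum>j\<le>i'. - F i' j)"
        unfolding sum_distrib_left Suc lessThan_Suc_atMost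
      proof (rule sum.cong, simp)
        fix j assume j: "j \<in> {..i'}"
        have "e (\<lambda>k. u (if k < j then k else Suc k)) = e (mixv l1 l2 i' (face m j x))"
          unfolding e_def
          by (rule epsl_cong) (use j iN Suc in \<open>auto simp: u_def mixv_def face_def N_def\<close>)
        then show "(-1)^(Suc i') * c j = - F i' j"
          unfolding c_def F_def by (simp add: power_add)
      qed
      then show ?thesis unfolding Lo_def using Suc by (simp add: sum_negf)
    qed
    have "0 = (-1)^i * (\<Sum>j\<le>Suc N. c j)" using coc by simp
    also have "\<dots> = (-1)^i * (\<Sum>j<i. c j) + (-1)^i * c i + (-1)^i * c (Suc i) + (-1)^i * (\<Sum>k\<in>{Suc i..N}. c (Suc k))"
      unfolding split by (simp add: distrib_left)
    also have "\<dots> = (if i = 0 then 0 else - Lo (i - 1)) + e (S i) - e (S (Suc i)) - Hi i"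
      unfolding lo hi ci cSi using m1sq[of i] by (simp add: mult.assoc[symmetric])
    finally show ?thesis by (simp add: algebra_simps)
  qed
  have "0 = (\<Sum>i\<le>N. (if i = 0 then 0 else - Lo (i - 1)) - Hi i + e (S i) - e (S (Suc i)))"
    using per by simp
  also have "\<dots> = (\<Sum>i\<le>N. (if i = 0 then 0 else - Lo (i - 1))) - (\<Sum>i\<le>N. Hi i) + (\<Sum>i\<le>N. e (S i) - e (S (Suc i)))"
    by (simp add: sum.distrib sum_subtractf algebra_simps)
  also have "(\<Sum>i\<le>N. (if i = 0 then 0 else - Lo (i - 1))) = - (\<Sum>i\<le>m. Lo i)"
    unfolding N_def by (subst sum.atMost_Suc_shift) (simp add: sum_negf)
  also have "(\<Sum>i\<le>N. Hi i) = (\<Sum>i\<le>m. Hi i)"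
    by (simp add: Hi_def N_def)
  also have "(\<Sum>i\<le>N. e (S i) - e (S (Suc i))) = e (S 0) - e (S (Suc N))"
    by (rule sum_telescope)
  also have "e (S 0) = epsl (Suc m) (\<lambda>j. l2 (x j))" unfolding e_def S_def N_def by simp
  also have "e (S (Suc N)) = epsl (Suc m) (\<lambda>j. l1 (x j))" unfolding e_def N_def
    by (rule epsl_cong) (simp add: S_def)
  finally have z: "0 = - (\<Sum>i\<le>m. Lo i) - (\<Sum>i\<le>m. Hi i) + (epsl (Suc m) (\<lambda>j. l2 (x j)) - epsl (Suc m) (\<lambda>j. l1 (x j)))" .
  have "cobdry m (psi m l1 l2) x = (\<Sum>i\<le>m. Lo i) + (\<Sum>i\<le>m. Hi i)" using lhs by (simp add: sum.distrib)
  with z show ?thesis by (simp add: algebra_simps)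
qed

definition lab :: "nat \<Rightarrow> (nat \<Rightarrow> 'a set) \<Rightarrow> (nat \<Rightarrow> nat) \<Rightarrow> 'a \<Rightarrow> nat" where
  "lab n X \<sigma> p = (if \<forall>k\<in>{1..n}. p \<in> X (\<sigma> k) then 0 else Max {i\<in>{1..n}. p \<notin> X (\<sigma> i)})"

lemma lab_le: "lab n X \<sigma> p \<le> n"
proof (cases "\<forall>k\<in>{1..n}. p \<in> X (\<sigma> k)")
  case False
  then have ne: "{i\<in>{1..n}. p \<notin> X (\<sigma> i)} \<noteq> {}" by auto
  have "Max {i\<in>{1..n}. p \<notin> X (\<sigma> i)} \<in> {i\<in>{1..n}. p \<notin> X (\<sigma> i)}" using Max_in[OF _ ne] by auto
  then show ?thesis using False unfolding lab_def by auto
qed (simp add: lab_def)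

lemma lab_pos: "lab n X \<sigma> p = c \<Longrightarrow> c \<noteq> 0 \<Longrightarrow> c \<in> {1..n} \<and> p \<notin> X (\<sigma> c)"
proof -
  assume a: "lab n X \<sigma> p = c" "c \<noteq> 0"
  have F: "\<not> (\<forall>k\<in>{1..n}. p \<in> X (\<sigma> k))"
  proof
    assume "\<forall>k\<in>{1..n}. p \<in> X (\<sigma> k)"
    then have "lab n X \<sigma> p = 0" unfolding lab_def by simp
    then show False using a by simp
  qed
  then have ne: "{i\<in>{1..n}. p \<notin> X (\<sigma> i)} \<noteq> {}" by auto
  have "Max {i\<in>{1..n}. p \<notin> X (\<sigma> i)} \<in> {i\<in>{1..n}. p \<notin> X (\<sigma> i)}" using Max_in[OF _ ne] by auto
  moreover have "lab n X \<sigma> p = Max {i\<in>{1..n}. p \<notin> X (\<sigma> i)}" unfolding lab_def by (rule if_not_P[OF F])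
  ultimately show ?thesis using a by simp
qed

lemma lab_zero: "lab n X \<sigma> p = 0 \<longleftrightarrow> (\<forall>k\<in>{1..n}. p \<in> X (\<sigma> k))"
proof
  assume a: "lab n X \<sigma> p = 0"
  show "\<forall>k\<in>{1..n}. p \<in> X (\<sigma> k)"
  proof (rule ccontr)
    assume F: "\<not> (\<forall>k\<in>{1..n}. p \<in> X (\<sigma> k))"
    then have ne: "{i\<in>{1..n}. p \<notin> X (\<sigma> i)} \<noteq> {}" by auto
    have "Max {i\<in>{1..n}. p \<notin> X (\<sigma> i)} \<in> {i\<in>{1..n}. p \<notin> X (\<sigma> i)}" using Max_in[OF _ ne] by auto
    moreover have "lab n X \<sigma> p = Max {i\<in>{1..n}. p \<notin> X (\<sigma> i)}" unfolding lab_def by (rule if_not_P[OF F])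
    ultimately show False using a by simp
  qed
qed (simp add: lab_def)

lemma lab_Aset:
  assumes j: "j \<le> n"
  shows "p \<in> Aset n X \<sigma> j \<longleftrightarrow> lab n X \<sigma> p = j"
proof (cases "j = 0")
  case True
  then show ?thesis using lab_zero[of n X \<sigma> p] unfolding Aset_def by auto
next
  case False
  let ?S = "{i\<in>{1..n}. p \<notin> X (\<sigma> i)}"
  show ?thesis
  proof
    assume "p \<in> Aset n X \<sigma> j"
    then have pj: "p \<notin> X (\<sigma> j)" and hi: "\<And>k. k \<in> {j+1..n} \<Longrightarrow> p \<in> X (\<sigma> k)"
      using False unfolding Aset_def by auto
    have jS: "j \<in> ?S" using pj j False by auto
    have "Max ?S = j"
    proof (rule Max_eqI)
      show "finite ?S" by simp
      show "j \<in> ?S" by fact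
      fix y assume "y \<in> ?S"
      then show "y \<le> j" using hi[of y] by (cases "y \<le> j") auto
    qed
    then show "lab n X \<sigma> p = j" using jS unfolding lab_def by auto
  next
    assume l: "lab n X \<sigma> p = j"
    then have F: "\<not> (\<forall>k\<in>{1..n}. p \<in> X (\<sigma> k))" using False lab_zero[of n X \<sigma> p] by auto
    then have M: "Max ?S = j" using l unfolding lab_def by auto
    have pj: "p \<notin> X (\<sigma> j)" using lab_pos[OF l False] by simp
    have "p \<in> X (\<sigma> k)" if k: "k \<in> {j+1..n}" for k
    proof (rule ccontr)
      assume "p \<notin> X (\<sigma> k)"
      then have "k \<in> ?S" using k by auto
      then have "k \<le> Max ?S" by simp
      then show False using M k by simp
    qed
    then show "p \<in> Aset n X \<sigma> j" using pj False unfolding Aset_def by auto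
  qed
qed

lemma wedge_lab: "wedge n (\<lambda>i. indicator (Aset n X \<sigma> i)) x = epsl n (\<lambda>i. lab n X \<sigma> (x i))"
  unfolding wedge_def epsl_def
proof (intro sum.cong refl arg_cong[where f="\<lambda>z. _ * z"] prod.cong)
  fix \<tau> i assume t: "\<tau> \<in> {\<tau>. \<tau> permutes {..n}}" and i: "i \<in> {..n}"
  then have "\<tau> i \<le> n" using permutes_in_image[of \<tau> "{..n}" i] by auto
  then show "(indicator (Aset n X \<sigma> (\<tau> i)) (x i) :: complex) = of_bool (lab n X \<sigma> (x i) = \<tau> i)"
    using lab_Aset[of "\<tau> i" n "x i" X \<sigma>] by (simp add: indicator_def)
qed

lemma Aset_borel:
  assumes "\<And>i. i \<in> {1..n} \<Longrightarrow> X i \<in> sets borel" "\<sigma> permutes {1..n}" "j \<le> n"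
  shows "Aset n X \<sigma> j \<in> sets borel"
proof -
  have sb: "X (\<sigma> k) \<in> sets borel" if "k \<in> {1..n}" for k
    using assms permutes_in_image[OF assms(2)] that by auto
  have I: "(\<Inter>k\<in>A. X (\<sigma> k)) \<in> sets borel" if "A \<subseteq> {1..n}" for A
  proof (cases "A = {}")
    case True then show ?thesis by simp
  next
    case False
    have "finite A" using that finite_subset by blast
    then show ?thesis by (intro sets.finite_INT) (use sb that False in auto)
  qed
  show ?thesis unfolding Aset_def
    using I[of "{1..n}"] I[of "{j+1..n}"] sb[of j]
    using assms(3) by (auto intro!: sets.Int borel_comp)
qed



lemma norm_epsl: "norm (epsl n t) \<le> real (card {\<tau>. \<tau> permutes {..n}})"
proof -
  have "norm (epsl n t) \<le> (\<Sum>\<tau>\<in>{\<tau>. \<tau> permutes {..n}}. 1)"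
    unfolding epsl_def
  proof (rule sum_norm_le)
    fix \<tau> :: "nat \<Rightarrow> nat"
    have s: "\<bar>real_of_int (sign \<tau>)\<bar> = 1" by (simp add: sign_def)
    have "norm (\<Prod>i\<le>n. (of_bool (t i = \<tau> i) :: complex)) = (\<Prod>i\<le>n. norm (of_bool (t i = \<tau> i) :: complex))"
      by (simp add: prod_norm)
    also have "\<dots> \<le> 1" by (rule prod_le_1) auto
    finally show "norm (of_int (sign \<tau>) * (\<Prod>i\<le>n. (of_bool (t i = \<tau> i) :: complex))) \<le> 1"
      by (simp add: norm_mult s)
  qed
  then show ?thesis by simp
qed

lemma epsl_nz: "epsl n t \<noteq> 0 \<Longrightarrow> \<exists>\<tau>. \<tau> permutes {..n} \<and> (\<forall>k\<le>n. t k = \<tau> k)"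
proof (rule ccontr)
  assume a: "epsl n t \<noteq> 0" "\<not> (\<exists>\<tau>. \<tau> permutes {..n} \<and> (\<forall>k\<le>n. t k = \<tau> k))"
  have "epsl n t = 0" unfolding epsl_def
  proof (rule sum.neutral, rule ballI)
    fix \<tau> assume "\<tau> \<in> {\<tau>. \<tau> permutes {..n}}"
    then obtain k where "k \<le> n" "t k \<noteq> \<tau> k" using a(2) by auto
    then have "(\<Prod>i\<le>n. (of_bool (t i = \<tau> i) :: complex)) = 0"
      by (intro prod_zero) auto
    then show "of_int (sign \<tau>) * (\<Prod>i\<le>n. (of_bool (t i = \<tau> i) :: complex)) = 0" by simp
  qed
  then show False using a(1) by simp
qed

lemma psi_CX:
  fixes X :: "nat \<Rightarrow> 'a::heine_borel set" and l1 l2 :: "'a \<Rightarrow> nat"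
  assumes ct: "coarsely_transverse (Suc m) X"
    and b1: "\<And>p. l1 p \<le> Suc m" and b2: "\<And>p. l2 p \<le> Suc m"
    and m1: "\<And>c. {p. l1 p = c} \<in> sets borel" and m2: "\<And>c. {p. l2 p = c} \<in> sets borel"
    and z: "\<And>p. l1 p = 0 \<or> l2 p = 0 \<Longrightarrow> \<forall>j\<in>{1..Suc m}. p \<in> X j"
    and nz: "\<And>j. j \<in> {1..Suc m} \<Longrightarrow> \<exists>c\<le>Suc m. \<forall>p. (l1 p = c \<or> l2 p = c) \<longrightarrow> p \<notin> X j"
  shows "psi m l1 l2 \<in> CX m"
proof -
  let ?M = "PiM {..m} (\<lambda>_. borel) :: (nat \<Rightarrow> 'a) measure"
  have fac: "(\<lambda>x. (of_bool (mixv l1 l2 i x k = c) :: complex)) \<in> borel_measurable ?M"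
    if i: "i \<le> m" and k: "k \<le> Suc m" for i k c
  proof (cases "k \<le> i")
    case True
    have eq: "(\<lambda>x. (of_bool (mixv l1 l2 i x k = c) :: complex)) = (\<lambda>x. indicator {p. l1 p = c} (x k))"
      using True by (auto simp: mixv_def indicator_def)
    have "k \<in> {..m}" using True i by simp
    then show ?thesis unfolding eq
      using measurable_compose[OF measurable_component_singleton[of k "{..m}" "\<lambda>_. borel"] borel_measurable_indicator[OF m1]]
      by simp
  next
    case False
    have eq: "(\<lambda>x. (of_bool (mixv l1 l2 i x k = c) :: complex)) = (\<lambda>x. indicator {p. l2 p = c} (x (k - 1)))"
      using False by (auto simp: mixv_def indicator_def)
    have "k - 1 \<in> {..m}" using k by simp
    then show ?thesis unfolding eq
      using measurable_compose[OF measurable_component_singleton[of "k - 1" "{..m}" "\<lambda>_. borel"] borel_measurable_indicator[OF m2]]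
      by simp
  qed
  have meas: "psi m l1 l2 \<in> borel_measurable ?M"
    unfolding psi_def[abs_def] epsl_def
    by (intro borel_measurable_sum borel_measurable_times borel_measurable_const borel_measurable_prod fac) auto
  define C where "C = real (Suc m) * real (card {\<tau>. \<tau> permutes {..Suc m}})"
  have bnd: "norm (psi m l1 l2 x) \<le> C" for x
  proof -
    have "norm (psi m l1 l2 x) \<le> (\<Sum>i\<le>m. real (card {\<tau>. \<tau> permutes {..Suc m}}))"
      unfolding psi_def
      by (rule sum_norm_le) (simp add: norm_mult norm_epsl norm_power)
    then show ?thesis unfolding C_def by simp
  qed
  have lb: "locally_bounded_prod m (psi m l1 l2)"
    unfolding locally_bounded_prod_def using bnd by blast
  have ctl: "bounded_prod m ({x \<in> prodsp m. psi m l1 l2 x \<noteq> 0} \<inter> diag_thick m R)" if R: "R > 0" for R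
  proof -
    define K where "K = (\<Inter>i\<in>{1..Suc m}. thick (X i) R \<inter> thick (- X i) R)"
    have "bounded K" using ct R unfolding coarsely_transverse_def K_def by auto
    then obtain e where e: "\<And>y. y \<in> K \<Longrightarrow> dist (undefined::'a) y \<le> e"
      using bounded_any_center[of K undefined] by auto
    define zc :: "nat \<Rightarrow> 'a" where "zc = restrict (\<lambda>_. undefined) {..m}"
    have zcp: "zc \<in> prodsp m" unfolding zc_def prodsp_def by (simp add: restrict_PiE_iff)
    have "dmax m x zc \<le> R + e" if xS: "x \<in> {x \<in> prodsp m. psi m l1 l2 x \<noteq> 0} \<inter> diag_thick m R" for x
    proof -
      from xS obtain zz where zz: "dmax m x (\<lambda>_. zz) \<le> R" and pnz: "psi m l1 l2 x \<noteq> 0"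
        unfolding diag_thick_def by auto
      have dk: "dist (x k) zz \<le> R" if "k \<le> m" for k
      proof -
        have "dist (x k) zz \<le> dmax m x (\<lambda>_. zz)" unfolding dmax_def
          by (rule Max_ge) (use that in auto)
        then show ?thesis using zz by simp
      qed
      obtain i where i: "i \<le> m" "epsl (Suc m) (mixv l1 l2 i x) \<noteq> 0"
      proof (rule ccontr)
        assume "\<not> thesis"
        then have "\<forall>i\<le>m. epsl (Suc m) (mixv l1 l2 i x) = 0" using that by blast
        then have "psi m l1 l2 x = 0" unfolding psi_def by simp
        then show False using pnz by simp
      qed
      obtain \<tau> where tau: "\<tau> permutes {..Suc m}" "\<And>k. k \<le> Suc m \<Longrightarrow> mixv l1 l2 i x k = \<tau> k"
        using epsl_nz[OF i(2)] by auto
      have cover: "\<exists>k\<le>m. l1 (x k) = c \<or> l2 (x k) = c" if c: "c \<le> Suc m" for c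
      proof -
        define k0 where "k0 = Hilbert_Choice.inv \<tau> c"
        have k0: "k0 \<le> Suc m" using permutes_in_image[OF permutes_inv[OF tau(1)]] c unfolding k0_def by auto
        have "\<tau> k0 = c" unfolding k0_def using permutes_inverses(1)[OF tau(1)] by simp
        then have "mixv l1 l2 i x k0 = c" using tau(2)[OF k0] by simp
        then show ?thesis
        proof (cases "k0 \<le> i")
          case True
          then show ?thesis using \<open>mixv l1 l2 i x k0 = c\<close> i(1) by (intro exI[of _ k0]) (auto simp: mixv_def)
        next
          case False
          then show ?thesis using \<open>mixv l1 l2 i x k0 = c\<close> k0 by (intro exI[of _ "k0 - 1"]) (auto simp: mixv_def)
        qed
      qed
      have zzK: "zz \<in> K" unfolding K_def
      proof (rule InterI, clarsimp)
        fix j assume j: "Suc 0 \<le> j" "j \<le> Suc m"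
        obtain k where k: "k \<le> m" "l1 (x k) = 0 \<or> l2 (x k) = 0" using cover[of 0] by auto
        have "x k \<in> X j" using z[OF k(2)] j by auto
        then have t1: "zz \<in> thick (X j) R" unfolding thick_def
          using infdist_le[of "x k" "X j" zz] dk[OF k(1)] by (auto simp: dist_commute)
        obtain c where c: "c \<le> Suc m" "\<And>p. (l1 p = c \<or> l2 p = c) \<Longrightarrow> p \<notin> X j" using nz[of j] j by auto
        obtain k' where k': "k' \<le> m" "l1 (x k') = c \<or> l2 (x k') = c" using cover[OF c(1)] by auto
        have "x k' \<in> - X j" using c(2)[OF k'(2)] by simp
        then have t2: "zz \<in> thick (- X j) R" unfolding thick_def
          using infdist_le[of "x k'" "- X j" zz] dk[OF k'(1)] by (auto simp: dist_commute)
        show "zz \<in> thick (X j) R \<and> zz \<in> thick (- X j) R" using t1 t2 by simp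
      qed
      have "dist (x k) undefined \<le> R + e" if "k \<le> m" for k
      proof -
        have "dist (x k) undefined \<le> dist (x k) zz + dist zz undefined" by (rule dist_triangle)
        also have "\<dots> \<le> R + e" using dk[OF that] e[OF zzK] by (simp add: dist_commute)
        finally show ?thesis .
      qed
      then show ?thesis unfolding dmax_def zc_def by (subst Max_le_iff) auto
    qed
    then show ?thesis unfolding bounded_prod_def using zcp by blast
  qed
  show ?thesis unfolding CX_def using meas lb ctl by blast
qed

theorem proposition5p7:
  fixes n :: nat and X :: "nat \<Rightarrow> 'a::heine_borel set" and \<sigma> :: "nat \<Rightarrow> nat"
  assumes "coarsely_transverse n X"
    and "\<sigma> permutes {1..n}"
  shows "same_class n
           (wedge n (\<lambda>i. indicator (Aset n X \<sigma> i)))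
           (\<lambda>x. of_int (sign \<sigma>) * wedge n (\<lambda>i. indicator (Aset n X id i)) x)"
proof (cases n)
  case 0
  then have "\<sigma> = id" using assms(2) by simp
  then show ?thesis using 0 unfolding same_class_def by simp
next
  case (Suc m)
  note ct = assms(1) and sp = assms(2)
  have Xb: "\<And>i. i \<in> {1..n} \<Longrightarrow> X i \<in> sets borel" using ct unfolding coarsely_transverse_def by auto
  have pn: "\<sigma> permutes {..n}" by (rule permutes_subset[OF sp]) auto
  define iv where "iv = Hilbert_Choice.inv \<sigma>"
  have ipn: "iv permutes {..n}" unfolding iv_def by (rule permutes_inv[OF pn])
  have ivs: "iv a = c \<longleftrightarrow> a = \<sigma> c" for a c
    unfolding iv_def using permutes_inverses[OF pn] by metis
  have s0: "\<sigma> 0 = 0" using permutes_not_in[OF sp] by simp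
  have sin: "\<sigma> c \<in> {1..n}" if "c \<in> {1..n}" for c using permutes_in_image[OF sp] that by simp
  have ivin: "iv c \<in> {1..n}" if "c \<in> {1..n}" for c
    using permutes_in_image[OF permutes_inv[OF sp]] that unfolding iv_def by simp
  have sle: "\<sigma> c \<le> n \<longleftrightarrow> c \<le> n" for c using permutes_in_image[OF pn] by simp
  define l1 where "l1 p = iv (lab n X id p)" for p
  define l2 where "l2 = lab n X \<sigma>"
  have b1: "l1 p \<le> Suc m" for p
    using lab_le[of n X id p] permutes_in_image[OF ipn, of "lab n X id p"] Suc unfolding l1_def by simp
  have b2: "l2 p \<le> Suc m" for p using lab_le[of n X \<sigma> p] Suc unfolding l2_def by simp
  have idp: "id permutes {1..n}" by (rule permutes_id)
  have m2: "{p. l2 p = c} \<in> sets borel" for c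
  proof (cases "c \<le> n")
    case True
    then have "{p. l2 p = c} = Aset n X \<sigma> c" unfolding l2_def using lab_Aset[OF True, of _ X \<sigma>] by blast
    then show ?thesis using Aset_borel[OF Xb sp True] by simp
  next
    case False
    have "l2 p \<noteq> c" for p using b2[of p] False Suc by auto
    then have "{p. l2 p = c} = {}" by auto
    then show ?thesis by simp
  qed
  have m1: "{p. l1 p = c} \<in> sets borel" for c
  proof (cases "c \<le> n")
    case True
    then have T: "\<sigma> c \<le> n" using sle by simp
    have "{p. l1 p = c} = Aset n X id (\<sigma> c)"
    proof (rule Set.set_eqI)
      fix p
      have "l1 p = c \<longleftrightarrow> lab n X id p = \<sigma> c" unfolding l1_def by (rule ivs)
      then show "p \<in> {p. l1 p = c} \<longleftrightarrow> p \<in> Aset n X id (\<sigma> c)"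
        using lab_Aset[OF T, of p X id] by simp
    qed
    then show ?thesis using Aset_borel[OF Xb idp T] by simp
  next
    case False
    have "l1 p \<noteq> c" for p using b1[of p] False Suc by auto
    then have "{p. l1 p = c} = {}" by auto
    then show ?thesis by simp
  qed
  have z: "\<forall>j\<in>{1..Suc m}. p \<in> X j" if "l1 p = 0 \<or> l2 p = 0" for p
  proof
    fix j assume j: "j \<in> {1..Suc m}"
    show "p \<in> X j"
    proof (cases "l1 p = 0")
      case True
      then have "lab n X id p = \<sigma> 0" using ivs[of "lab n X id p" 0] unfolding l1_def by simp
      then have "lab n X id p = 0" using s0 by simp
      then have "\<forall>k\<in>{1..n}. p \<in> X (id k)" using lab_zero[of n X id p] by (simp only:)
      then show ?thesis using j Suc by simp
    next
      case False
      then have "lab n X \<sigma> p = 0" using that unfolding l2_def by simp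
      then have "\<forall>k\<in>{1..n}. p \<in> X (\<sigma> k)" using lab_zero[of n X \<sigma> p] by (simp only:)
      moreover have "iv j \<in> {1..n}" using ivin j Suc by simp
      moreover have "\<sigma> (iv j) = j" using ivs[of j "iv j"] by simp
      ultimately show ?thesis by force
    qed
  qed
  have nz: "\<exists>c\<le>Suc m. \<forall>p. (l1 p = c \<or> l2 p = c) \<longrightarrow> p \<notin> X j" if j: "j \<in> {1..Suc m}" for j
  proof (intro exI[of _ "iv j"] conjI allI impI)
    have jn: "j \<in> {1..n}" using j Suc by simp
    have c1: "iv j \<in> {1..n}" using ivin[OF jn] .
    then show "iv j \<le> Suc m" using Suc by simp
    have sj: "\<sigma> (iv j) = j" using ivs[of j "iv j"] by simp
    fix p assume "l1 p = iv j \<or> l2 p = iv j"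
    then show "p \<notin> X j"
    proof
      assume "l1 p = iv j"
      then have "lab n X id p = j" unfolding l1_def ivs sj .
      then show ?thesis using lab_pos[of n X id p j] jn by auto
    next
      assume "l2 p = iv j"
      then have "lab n X \<sigma> p = iv j" unfolding l2_def .
      then show ?thesis using lab_pos[of n X \<sigma> p "iv j"] c1 sj by auto
    qed
  qed
  have ctm: "coarsely_transverse (Suc m) X" using ct Suc by simp
  have psiCX: "psi m l1 l2 \<in> CX m" by (rule psi_CX[OF ctm b1 b2 m1 m2 z nz])
  have sg: "sign iv = sign \<sigma>" unfolding iv_def
    by (rule sign_inverse[OF permutes_imp_permutation[OF _ pn]]) simp
  have eq: "wedge n (\<lambda>i. indicator (Aset n X \<sigma> i)) x - of_int (sign \<sigma>) * wedge n (\<lambda>i. indicator (Aset n X id i)) x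
       = cobdry m (psi m l1 l2) x" for x
  proof -
    have "of_int (sign \<sigma>) * wedge n (\<lambda>i. indicator (Aset n X id i)) x = epsl n (\<lambda>i. l1 (x i))"
      unfolding wedge_lab l1_def epsl_perm[OF ipn] sg ..
    moreover have "wedge n (\<lambda>i. indicator (Aset n X \<sigma> i)) x = epsl n (\<lambda>i. l2 (x i))"
      unfolding wedge_lab l2_def ..
    ultimately show ?thesis using prism[of l1 m l2 x, OF b1 b2] Suc by simp
  qed
  have ne: "n \<noteq> 0" "n - 1 = m" using Suc by auto
  have ex: "\<exists>\<psi>\<in>CX (n - 1). \<forall>x\<in>prodsp n. wedge n (\<lambda>i. indicator (Aset n X \<sigma> i)) x - of_int (sign \<sigma>) * wedge n (\<lambda>i. indicator (Aset n X id i)) x = cobdry (n - 1) \<psi> x"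
    unfolding ne(2)
  proof (rule bexI[OF _ psiCX], rule ballI)
    fix x show "wedge n (\<lambda>i. indicator (Aset n X \<sigma> i)) x - of_int (sign \<sigma>) * wedge n (\<lambda>i. indicator (Aset n X id i)) x = cobdry m (psi m l1 l2) x"
      by (rule eq)
  qed
  show ?thesis unfolding same_class_def if_not_P[OF ne(1)] using ex by blast
qed

end
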